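(* Let $H$ be a numerical semigroup, $k$ a field, $R=k[H]$ Gorenstein, $a=\mathrm{a}(R)$, and let $\mathcal{X}_R$ be the set of graded ideals $I$ of $R$ with $R/I$ Gorenstein and $\mu_R(I)\ge 2$. Then $$\mathcal{X}_R=\{R:_Rt^m,\ t^m(R:_Rt^m)\mid m\in\mathbb{N}\setminus H\}.$$ Moreover, for each $m\in\mathbb{N}\setminus H$, $\mathrm{a}(R/(R:_Rt^m))=a-m$ and $\mathrm{a}(R/t^m(R:_Rt^m))=a+m$.
   Context: $R=k[H]=k[t^h\mid h\in H]\subseteq k[t]$ graded by $\deg t=1$; $R:_Rt^m=\{x\in R\mid xt^m\in R\}$. $\mathrm{a}(R)=\mathrm{c}(H)-1=\max(\mathbb{Z}\setminus H)$ with $\mathrm{c}(H)$ the conductor of $H$; for an Artinian graded quotient $R/I$, $\mathrm{a}(R/I)$ is the largest $n$ with $[R/I]_n\neq 0$. $R$ Gorenstein is equivalent to $H$ symmetric. *)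

theory Defs
  imports "HOL-Computational_Algebra.Polynomial"
begin

definition numerical_semigroup :: "nat set \<Rightarrow> bool" where
  "numerical_semigroup H \<longleftrightarrow> 0 \<in> H \<and> (\<forall>a\<in>H. \<forall>b\<in>H. a + b \<in> H) \<and> finite (- H)"

text \<open>Frobenius number max(Z minus H) = c(H) - 1 = a(R); equals -1 if H = N.\<close>
definition frob :: "nat set \<Rightarrow> int" where
  "frob H = Max ({-1} \<union> int ` (- H))"

definition symmetric_sg :: "nat set \<Rightarrow> bool" where
  "symmetric_sg H \<longleftrightarrow> (\<forall>z::int. z \<in> int ` H \<longleftrightarrow> frob H - z \<notin> int ` H)"

definition sgring :: "nat set \<Rightarrow> 'a::field poly set" where
  "sgring H = {p. \<forall>n. coeff p n \<noteq> 0 \<longrightarrow> n \<in> H}"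

definition ideal_of :: "nat set \<Rightarrow> 'a::field poly set \<Rightarrow> bool" where
  "ideal_of H I \<longleftrightarrow> I \<subseteq> sgring H \<and> 0 \<in> I \<and> (\<forall>x\<in>I. \<forall>y\<in>I. x + y \<in> I)
     \<and> (\<forall>r\<in>sgring H. \<forall>x\<in>I. r * x \<in> I)"

definition graded_ideal :: "nat set \<Rightarrow> 'a::field poly set \<Rightarrow> bool" where
  "graded_ideal H I \<longleftrightarrow> ideal_of H I \<and> (\<forall>x\<in>I. \<forall>n. monom (coeff x n) n \<in> I)"

definition colon :: "nat set \<Rightarrow> nat \<Rightarrow> 'a::field poly set" where
  "colon H m = {x \<in> sgring H. x * monom 1 m \<in> sgring H}"

definition shifted_colon :: "nat set \<Rightarrow> nat \<Rightarrow> 'a::field poly set" where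
  "shifted_colon H m = (\<lambda>x. monom 1 m * x) ` colon H m"

definition mu :: "nat set \<Rightarrow> 'a::field poly set \<Rightarrow> nat" where
  "mu H I = (LEAST n. \<exists>G. finite G \<and> card G = n \<and> G \<subseteq> I \<and>
       I = {\<Sum>g\<in>G. r g * g | r. \<forall>g\<in>G. r g \<in> sgring H})"

text \<open>Socle preimage: elements p of R with p * R_+ in I, R_+ the graded maximal ideal.\<close>
definition socle :: "nat set \<Rightarrow> 'a::field poly set \<Rightarrow> 'a poly set" where
  "socle H I = {p \<in> sgring H. \<forall>q\<in>sgring H. coeff q 0 = 0 \<longrightarrow> p * q \<in> I}"

text \<open>For I = 0, R/I = R, Gorenstein iff H symmetric;
  for I nonzero graded, R/I is Artinian graded with residue field k, and it is Gorenstein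
  iff its socle (socle H I)/I is a one-dimensional k-vector space.\<close>
definition gorenstein_quot :: "nat set \<Rightarrow> 'a::field poly set \<Rightarrow> bool" where
  "gorenstein_quot H I \<longleftrightarrow>
     (if I = {0} then symmetric_sg H
      else (\<exists>p\<in>socle H I. p \<notin> I \<and> (\<forall>s\<in>socle H I. \<exists>c. s - smult c p \<in> I)))"

definition a_quot :: "nat set \<Rightarrow> 'a::field poly set \<Rightarrow> nat" where
  "a_quot H I = Max {n. \<exists>c. monom c n \<in> sgring H \<and> monom c n \<notin> I}"

end

theory Submission
  imports Defs
begin


definition MS :: "nat set \<Rightarrow> 'a::field poly set" where
  "MS E = {p. \<forall>n. coeff p n \<noteq> 0 \<longrightarrow> n \<in> E}"

lemma sgring_MS: "sgring H = MS H" by (simp add: sgring_def MS_def)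

lemma monom_MS: "monom c n \<in> MS E \<longleftrightarrow> c = 0 \<or> n \<in> E"
  by (auto simp: MS_def)

lemma MS_0: "0 \<in> MS E" by (simp add: MS_def)

lemma MS_add: "p \<in> MS E \<Longrightarrow> q \<in> MS E \<Longrightarrow> p + q \<in> MS E"
  unfolding MS_def
proof (intro CollectI allI impI)
  fix n assume "p \<in> {p. \<forall>n. coeff p n \<noteq> 0 \<longrightarrow> n \<in> E}" "q \<in> {p. \<forall>n. coeff p n \<noteq> 0 \<longrightarrow> n \<in> E}"
    "coeff (p + q) n \<noteq> 0"
  thus "n \<in> E" by (cases "coeff p n = 0") auto
qed

lemma MS_diff: "p \<in> MS E \<Longrightarrow> q \<in> MS E \<Longrightarrow> p - q \<in> MS E"
  unfolding MS_def
proof (intro CollectI allI impI)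
  fix n assume "p \<in> {p. \<forall>n. coeff p n \<noteq> 0 \<longrightarrow> n \<in> E}" "q \<in> {p. \<forall>n. coeff p n \<noteq> 0 \<longrightarrow> n \<in> E}"
    "coeff (p - q) n \<noteq> 0"
  thus "n \<in> E" by (cases "coeff p n = 0") auto
qed

lemma MS_sum: "finite A \<Longrightarrow> (\<And>i. i \<in> A \<Longrightarrow> f i \<in> MS E) \<Longrightarrow> sum f A \<in> MS E"
  by (induction A rule: finite_induct) (auto intro: MS_add MS_0)

lemma MS_mono: "E \<subseteq> E' \<Longrightarrow> MS E \<subseteq> MS E'"
  by (auto simp: MS_def)

lemma MS_mult:
  assumes id: "\<And>a b. a \<in> H \<Longrightarrow> b \<in> E \<Longrightarrow> a + b \<in> E"
    and r: "r \<in> MS H" and x: "x \<in> MS E"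
  shows "r * x \<in> MS E"
  unfolding MS_def
proof (intro CollectI allI impI)
  fix n assume "coeff (r * x) n \<noteq> 0"
  hence "(\<Sum>i\<le>n. coeff r i * coeff x (n-i)) \<noteq> 0" by (simp add: coeff_mult)
  then obtain i where "i \<le> n" "coeff r i * coeff x (n-i) \<noteq> 0"
    by (meson sum.neutral atMost_iff)
  hence "i \<in> H" "n - i \<in> E" "i \<le> n" using r x by (auto simp: MS_def)
  thus "n \<in> E" using id[of i "n-i"] by simp
qed

lemma MS_inj: "MS E = (MS E' :: 'a::field poly set) \<Longrightarrow> E = E'"
proof -
  assume h: "MS E = (MS E' :: 'a poly set)"
  have "n \<in> E \<longleftrightarrow> n \<in> E'" for n
    using arg_cong[OF h, of "\<lambda>S. (monom (1::'a) n) \<in> S"] by (simp add: monom_MS)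
  thus ?thesis by blast
qed

lemma MS_empty: "MS {} = {0}"
  by (auto simp: MS_def poly_eq_iff)

lemma graded_MS:
  assumes H0: "0 \<in> H" and g: "graded_ideal H (I :: 'a::field poly set)"
  shows "I = MS {n. monom 1 n \<in> I}"
proof -
  have I: "ideal_of H I" and gr: "\<And>x n. x \<in> I \<Longrightarrow> monom (coeff x n) n \<in> I"
    using g by (auto simp: graded_ideal_def)
  have sub: "I \<subseteq> MS H" and z: "0 \<in> I" and ad: "\<And>x y. x \<in> I \<Longrightarrow> y \<in> I \<Longrightarrow> x + y \<in> I"
    and ml: "\<And>r x. r \<in> MS H \<Longrightarrow> x \<in> I \<Longrightarrow> r * x \<in> I"
    using I by (auto simp: ideal_of_def sgring_MS)
  have c0: "monom c 0 \<in> MS H" for c :: 'a using H0 by (simp add: monom_MS)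
  show ?thesis
  proof
    show "I \<subseteq> MS {n. monom 1 n \<in> I}"
    proof (auto simp: MS_def)
      fix p n assume p: "p \<in> I" and c: "coeff p n \<noteq> 0"
      have "monom (1 / coeff p n) 0 * monom (coeff p n) n \<in> I"
        using ml[OF c0 gr[OF p]] .
      thus "monom 1 n \<in> I" using c by (simp add: mult_monom)
    qed
  next
    show "MS {n. monom 1 n \<in> I} \<subseteq> I"
    proof
      fix p :: "'a poly" assume p: "p \<in> MS {n. monom 1 n \<in> I}"
      have "monom (coeff p i) i \<in> I" for i
      proof (cases "coeff p i = 0")
        case True thus ?thesis using z by simp
      next
        case False
        hence "monom 1 i \<in> I" using p by (auto simp: MS_def)
        from ml[OF c0 this] show ?thesis by (simp add: mult_monom)
      qed
      hence "(\<Sum>i\<in>{..degree p}. monom (coeff p i) i) \<in> I"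
        by (induction rule: finite_induct[OF finite_atMost]) (auto intro: ad z)
      thus "p \<in> I" by (simp add: poly_as_sum_of_monoms)
    qed
  qed
qed

lemma MS_ideal:
  assumes sub: "E \<subseteq> H" and id: "\<And>a b. a \<in> H \<Longrightarrow> b \<in> E \<Longrightarrow> a + b \<in> E"
  shows "graded_ideal H (MS E :: 'a::field poly set)"
proof -
  have m: "\<forall>r\<in>MS H. \<forall>x\<in>(MS E :: 'a poly set). r * x \<in> MS E"
    using MS_mult[of H E, OF id] by blast
  have a: "\<forall>x\<in>(MS E :: 'a poly set). \<forall>y\<in>MS E. x + y \<in> MS E" using MS_add by blast
  have g: "\<forall>x\<in>(MS E :: 'a poly set). \<forall>n. monom (coeff x n) n \<in> MS E"
    by (simp add: monom_MS MS_def)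
  show ?thesis unfolding graded_ideal_def ideal_of_def sgring_MS
    using MS_mono[OF sub] MS_0 m a g by blast
qed

lemma shift_MS: "(\<lambda>x. monom 1 j * x) ` MS A = (MS {n. j \<le> n \<and> n - j \<in> A} :: 'a::field poly set)"
proof
  show "(\<lambda>x. monom 1 j * x) ` MS A \<subseteq> (MS {n. j \<le> n \<and> n - j \<in> A} :: 'a poly set)"
    by (auto simp: MS_def coeff_monom_mult split: if_splits)
next
  show "(MS {n. j \<le> n \<and> n - j \<in> A} :: 'a poly set) \<subseteq> (\<lambda>x. monom 1 j * x) ` MS A"
  proof
    fix q :: "'a poly" assume q: "q \<in> MS {n. j \<le> n \<and> n - j \<in> A}"
    have "q = monom 1 j * poly_shift j q"
    proof (rule poly_eqI)
      fix k show "coeff q k = coeff (monom 1 j * poly_shift j q) k"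
        using q by (cases "k < j") (auto simp: MS_def coeff_monom_mult coeff_poly_shift)
    qed
    moreover have "poly_shift j q \<in> MS A"
      using q by (auto simp: MS_def coeff_poly_shift)
    ultimately show "q \<in> (\<lambda>x. monom 1 j * x) ` MS A" by blast
  qed
qed

lemma colon_MS: "colon H m = (MS {n \<in> H. n + m \<in> H} :: 'a::field poly set)"
proof -
  have "x * monom 1 m \<in> MS H \<longleftrightarrow> (\<forall>n. coeff x n \<noteq> 0 \<longrightarrow> n + m \<in> H)" for x :: "'a poly"
  proof
    assume "x * monom 1 m \<in> MS H"
    hence "coeff (monom 1 m * x) k \<noteq> 0 \<longrightarrow> k \<in> H" for k by (auto simp: MS_def mult.commute)
    from this[of "_ + m"] show "\<forall>n. coeff x n \<noteq> 0 \<longrightarrow> n + m \<in> H" by (auto simp: coeff_monom_mult)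
  next
    assume h: "\<forall>n. coeff x n \<noteq> 0 \<longrightarrow> n + m \<in> H"
    show "x * monom 1 m \<in> MS H" unfolding MS_def
    proof (intro CollectI allI impI)
      fix k assume "coeff (x * monom 1 m) k \<noteq> 0"
      hence "\<not> k < m" "coeff x (k - m) \<noteq> 0" by (auto simp: mult.commute[of x] coeff_monom_mult split: if_splits)
      thus "k \<in> H" using h by force
    qed
  qed
  thus ?thesis by (auto simp: colon_def MS_def sgring_def)
qed

lemma shifted_MS: "shifted_colon H m = (MS {n. m \<le> n \<and> n \<in> H \<and> n - m \<in> H} :: 'a::field poly set)"
proof -
  have "{n. m \<le> n \<and> n - m \<in> {n \<in> H. n + m \<in> H}} = {n. m \<le> n \<and> n \<in> H \<and> n - m \<in> H}" by auto
  thus ?thesis unfolding shifted_colon_def colon_MS shift_MS by simp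
qed

definition SC :: "nat set \<Rightarrow> nat set \<Rightarrow> nat set" where
  "SC H E = {n \<in> H. \<forall>h\<in>H. 0 < h \<longrightarrow> n + h \<in> E}"

lemma socle_MS:
  assumes sub: "E \<subseteq> H" and id: "\<And>a b. a \<in> H \<Longrightarrow> b \<in> E \<Longrightarrow> a + b \<in> E"
  shows "socle H (MS E) = (MS (SC H E) :: 'a::field poly set)"
proof
  show "socle H (MS E) \<subseteq> (MS (SC H E) :: 'a poly set)"
  proof
    fix p :: "'a poly" assume p: "p \<in> socle H (MS E)"
    hence pH: "p \<in> MS H" and ps: "\<And>q. q \<in> MS H \<Longrightarrow> coeff q 0 = 0 \<Longrightarrow> p * q \<in> MS E"
      by (auto simp: socle_def sgring_MS)
    show "p \<in> MS (SC H E)" unfolding MS_def SC_def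
    proof (intro CollectI allI impI conjI ballI)
      fix n assume c: "coeff p n \<noteq> 0"
      thus "n \<in> H" using pH by (auto simp: MS_def)
      fix h assume h: "h \<in> H" "0 < h"
      have "p * monom 1 h \<in> MS E" using ps[of "monom 1 h"] h by (simp add: monom_MS)
      moreover have "coeff (p * monom 1 h) (n + h) = coeff p n"
        by (simp add: mult.commute[of p] coeff_monom_mult)
      ultimately show "n + h \<in> E" using c by (auto simp: MS_def)
    qed
  qed
next
  show "(MS (SC H E) :: 'a poly set) \<subseteq> socle H (MS E)"
  proof
    fix p :: "'a poly" assume p: "p \<in> MS (SC H E)"
    have pH: "p \<in> MS H" using MS_mono[of "SC H E" H] p by (auto simp: SC_def)
    have "p * q \<in> MS E" if q: "q \<in> MS H" "coeff q 0 = 0" for q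
      unfolding MS_def
    proof (intro CollectI allI impI)
      fix n assume "coeff (p * q) n \<noteq> 0"
      hence "(\<Sum>i\<le>n. coeff p i * coeff q (n-i)) \<noteq> 0" by (simp add: coeff_mult)
      then obtain i where "i \<le> n" "coeff p i * coeff q (n-i) \<noteq> 0"
        by (meson sum.neutral atMost_iff)
      hence "i \<in> SC H E" "n - i \<in> H" "n - i \<noteq> 0" "i \<le> n" using p q by (auto simp: MS_def)
      thus "n \<in> E" unfolding SC_def by (metis (no_types, lifting) add.commute le_add_diff_inverse mem_Collect_eq not_gr0)
    qed
    thus "p \<in> socle H (MS E)" using pH by (auto simp: socle_def sgring_MS)
  qed
qed

lemma a_quot_MS: "a_quot H (MS E :: 'a::field poly set) = Max (H - E)"
proof -
  have "{n. \<exists>c::'a. monom c n \<in> sgring H \<and> monom c n \<notin> MS E} = H - E"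
    by (auto simp: sgring_MS monom_MS intro: exI[of _ 1])
  thus ?thesis by (simp add: a_quot_def)
qed

definition span :: "nat set \<Rightarrow> 'a::field poly set \<Rightarrow> 'a poly set" where
  "span H G = {\<Sum>g\<in>G. r g * g | r. \<forall>g\<in>G. r g \<in> sgring H}"

lemma mu_le:
  assumes "finite G" "G \<subseteq> I" "I = span H G" shows "mu H I \<le> card G"
  unfolding mu_def
proof (rule Least_le)
  show "\<exists>Ga. finite Ga \<and> card Ga = card G \<and> Ga \<subseteq> I \<and>
       I = {\<Sum>g\<in>Ga. r g * g | r. \<forall>g\<in>Ga. r g \<in> sgring H}"
    using assms unfolding span_def by (intro exI[of _ G]) simp
qed

lemma span_empty: "span H {} = {0}" by (auto simp: span_def)

lemma span_single: "span H {g} = {r * g | r. r \<in> sgring H}"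
proof
  show "span H {g} \<subseteq> {r * g | r. r \<in> sgring H}" unfolding span_def by auto
next
  show "{r * g | r. r \<in> sgring H} \<subseteq> span H {g}"
  proof
    fix x assume "x \<in> {r * g | r. r \<in> sgring H}"
    then obtain r where "x = r * g" "r \<in> sgring H" by blast
    thus "x \<in> span H {g}" unfolding span_def by (intro CollectI exI[of _ "\<lambda>_. r"]) simp
  qed
qed

lemma mu_ge2:
  assumes "finite G0" "G0 \<subseteq> I" "I = span H G0" "I \<noteq> {0}"
    and np: "\<And>g. g \<in> I \<Longrightarrow> I \<noteq> {r * g | r. r \<in> sgring H}"
  shows "2 \<le> mu H I"
proof -
  have "\<exists>n G. finite G \<and> card G = n \<and> G \<subseteq> I \<and> I = span H G" using assms by blast
  hence "\<exists>G. finite G \<and> card G = mu H I \<and> G \<subseteq> I \<and> I = span H G"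
    unfolding mu_def span_def by (rule LeastI_ex)
  then obtain G where G: "finite G" "card G = mu H I" "G \<subseteq> I" "I = span H G" by blast
  show ?thesis
  proof (rule ccontr)
    assume "\<not> 2 \<le> mu H I"
    hence "card G = 0 \<or> card G = 1" using G by linarith
    thus False
    proof
      assume "card G = 0" hence "G = {}" using G by simp
      thus False using G assms(4) span_empty by metis
    next
      assume "card G = 1" then obtain g where "G = {g}" by (auto simp: card_Suc_eq)
      thus False using G np span_single by blast
    qed
  qed
qed

lemma principal_mu:
  assumes H0: "0 \<in> H"
  shows "mu H (MS {n. d \<le> n \<and> n - d \<in> H} :: 'a::field poly set) \<le> 1"
proof -
  have "MS {n. d \<le> n \<and> n - d \<in> H} = span H {monom (1::'a) d}"
    unfolding span_single sgring_MS shift_MS[symmetric] by (auto simp: mult.commute)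
  moreover have "{monom (1::'a) d} \<subseteq> MS {n. d \<le> n \<and> n - d \<in> H}" using H0 by (simp add: monom_MS)
  ultimately show ?thesis using mu_le[of "{monom (1::'a) d}"] by simp
qed

lemma principal_comb:
  assumes sub: "E \<subseteq> H" and id: "\<And>a b. a \<in> H \<Longrightarrow> b \<in> E \<Longrightarrow> a + b \<in> E"
    and ne: "E \<noteq> {}" and g: "g \<in> MS E" and eq: "MS E = {r * g | r. r \<in> (MS H :: 'a::field poly set)}"
  shows "\<exists>d. E = {n. d \<le> n \<and> n - d \<in> H}"
proof -
  obtain e where e: "e \<in> E" using ne by blast
  have "monom (1::'a) e \<in> MS E" using e by (simp add: monom_MS)
  then obtain r0 where "monom (1::'a) e = r0 * g" using eq by blast
  hence g0: "g \<noteq> 0" by auto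
  define d where "d = degree g"
  have dE: "d \<in> E" using g g0 by (auto simp: MS_def d_def)
  have "n \<in> E \<longleftrightarrow> d \<le> n \<and> n - d \<in> H" for n
  proof
    assume n: "n \<in> E"
    have "monom (1::'a) n \<in> MS E" using n by (simp add: monom_MS)
    then obtain r where r: "r \<in> MS H" "monom (1::'a) n = r * g" using eq by blast
    hence r0: "r \<noteq> 0" by auto
    have "n = degree r + d" using r(2) r0 g0 degree_mult_eq[of r g] by (metis d_def degree_monom_eq one_neq_zero)
    moreover have "degree r \<in> H" using r(1) r0 by (auto simp: MS_def)
    ultimately show "d \<le> n \<and> n - d \<in> H" by simp
  next
    assume "d \<le> n \<and> n - d \<in> H"
    thus "n \<in> E" using id[OF _ dE, of "n - d"] by simp
  qed
  thus ?thesis by blast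
qed

lemma span_sub:
  assumes id: "\<And>a b. a \<in> H \<Longrightarrow> b \<in> E \<Longrightarrow> a + b \<in> E" and fin: "finite G" and G: "G \<subseteq> MS E"
  shows "span H G \<subseteq> (MS E :: 'a::field poly set)"
  unfolding span_def sgring_MS using MS_mult[of H E, OF id] G
  by (auto intro!: MS_sum[OF fin])

lemma span_add:
  assumes fin: "finite G" "x \<in> span H G" "y \<in> span H G"
  shows "x + y \<in> span H G"
proof -
  obtain r s where "x = (\<Sum>g\<in>G. r g * g)" "\<forall>g\<in>G. r g \<in> sgring H"
    "y = (\<Sum>g\<in>G. s g * g)" "\<forall>g\<in>G. s g \<in> sgring H" using assms by (auto simp: span_def)
  moreover have "(\<Sum>g\<in>G. r g * g) + (\<Sum>g\<in>G. s g * g) = (\<Sum>g\<in>G. (r g + s g) * g)"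
    by (simp add: sum.distrib distrib_right)
  ultimately show ?thesis unfolding span_def sgring_MS
    by (auto intro!: exI[of _ "\<lambda>g. r g + s g"] MS_add)
qed

lemma span_0: "(0::'a::field poly) \<in> span H G"
  unfolding span_def by (auto intro!: exI[of _ "\<lambda>g. 0"] simp: sgring_MS MS_0)

lemma span_gen:
  assumes fin: "finite G" and g: "g \<in> G" and r: "r \<in> sgring H"
  shows "r * g \<in> span H G"
proof -
  have "(\<Sum>g'\<in>G. (if g' = g then r else 0) * g') = r * g"
  proof -
    have "(\<Sum>g'\<in>G. (if g' = g then r else 0) * g') = (\<Sum>g'\<in>G. if g = g' then r * g else 0)"
      by (rule sum.cong) auto
    also have "\<dots> = r * g" using fin g by simp
    finally show ?thesis .
  qed
  moreover have "\<forall>g'\<in>G. (if g' = g then r else 0) \<in> sgring H" using r by (simp add: sgring_MS MS_0)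
  ultimately show ?thesis unfolding span_def
    by (intro CollectI exI[of _ "\<lambda>g'. if g' = g then r else 0"]) simp
qed

lemma fg:
  assumes sub: "E \<subseteq> H" and id: "\<And>a b. a \<in> H \<Longrightarrow> b \<in> E \<Longrightarrow> a + b \<in> E"
    and e0: "e0 \<in> E" and H0: "0 \<in> H" and B: "\<And>n. B < n \<Longrightarrow> n \<in> H"
  shows "\<exists>G. finite G \<and> G \<subseteq> MS E \<and> (MS E :: 'a::field poly set) = span H G"
proof -
  define G where "G = (\<lambda>n. monom (1::'a) n) ` (E \<inter> {..e0 + B})"
  have fin: "finite G" by (simp add: G_def)
  have GE: "G \<subseteq> MS E" by (auto simp: G_def monom_MS)
  have mon: "monom c n \<in> span H G" if n: "n \<in> E" for n and c :: 'a
  proof (cases "n \<le> e0 + B")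
    case True
    hence "monom 1 n \<in> G" using n by (auto simp: G_def)
    from span_gen[OF fin this, of "monom c 0"] show ?thesis
      using H0 by (simp add: sgring_MS monom_MS mult_monom)
  next
    case False
    hence "monom 1 e0 \<in> G" using e0 by (auto simp: G_def)
    moreover have "n - e0 \<in> H" using False B by auto
    ultimately have "monom c (n - e0) * monom 1 e0 \<in> span H G"
      using span_gen[OF fin] by (auto simp: sgring_MS monom_MS)
    thus ?thesis using False by (simp add: mult_monom)
  qed
  have "MS E \<subseteq> span H G"
  proof
    fix p :: "'a poly" assume p: "p \<in> MS E"
    have "monom (coeff p i) i \<in> span H G" for i
      using p mon[of i "coeff p i"] span_0[of H G] by (cases "coeff p i = 0") (auto simp: MS_def)
    hence "(\<Sum>i\<in>{..degree p}. monom (coeff p i) i) \<in> span H G"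
      by (induction rule: finite_induct[OF finite_atMost]) (auto intro: span_add[OF fin] span_0)
    thus "p \<in> span H G" by (simp add: poly_as_sum_of_monoms)
  qed
  with span_sub[OF id fin GE] show ?thesis using fin GE by blast
qed



lemma bound_ex: "finite (- (H::nat set)) \<Longrightarrow> \<exists>B. \<forall>n. B < n \<longrightarrow> n \<in> H"
proof -
  assume f: "finite (- H)"
  obtain B where B: "\<forall>n\<in>-H. n \<le> B" using finite_nat_set_iff_bounded_le[THEN iffD1, OF f] by (elim exE)
  have "B < n \<longrightarrow> n \<in> H" for n
  proof
    assume "B < n"
    show "n \<in> H"
    proof (rule ccontr)
      assume "n \<notin> H" hence "n \<le> B" using B by simp
      thus False using \<open>B < n\<close> by simp
    qed
  qed
  thus ?thesis by (intro exI[of _ B]) simp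
qed

lemma frob_nat:
  assumes "H \<noteq> UNIV" "finite (- H)"
  shows "frob H = int (Max (- H))"
  unfolding frob_def
proof (rule Max_eqI)
  have ne: "- H \<noteq> {}" using assms(1) by blast
  show "finite ({-1} \<union> int ` (- H))" using assms by simp
  have "Max (- H) \<in> - H" using Max_in[OF assms(2) ne] .
  thus "int (Max (- H)) \<in> {-1} \<union> int ` (- H)" by blast
  fix y assume "y \<in> {-1} \<union> int ` (- H)"
  then consider "y = -1" | x where "x \<in> - H" "y = int x" by blast
  thus "y \<le> int (Max (- H))"
  proof cases
    case 1 thus ?thesis by simp
  next
    case 2 thus ?thesis using Max_ge[OF assms(2) 2(1)] by simp
  qed
qed

lemma int_mem: "int n \<in> int ` H \<longleftrightarrow> n \<in> H"
  by (rule inj_image_mem_iff) (simp add: inj_on_def)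

lemma sym_nat:
  assumes "symmetric_sg H" "frob H = int F" "n \<le> F"
  shows "n \<in> H \<longleftrightarrow> F - n \<notin> H"
proof -
  have h: "int n \<in> int ` H \<longleftrightarrow> frob H - int n \<notin> int ` H"
    using assms(1) unfolding symmetric_sg_def by (rule spec)
  have e: "frob H - int n = int (F - n)" using assms(2,3) by simp
  show ?thesis using h unfolding e int_mem .
qed

definition Es :: "nat set \<Rightarrow> nat \<Rightarrow> nat set" where
  "Es H s = {n \<in> H. \<not> (n \<le> s \<and> s - n \<in> H)}"

lemma Es_sub: "Es H s \<subseteq> H" by (auto simp: Es_def)

lemma Es_ideal:
  assumes cl: "\<And>a b. a \<in> H \<Longrightarrow> b \<in> H \<Longrightarrow> a + b \<in> H"
    and a: "a \<in> H" and b: "b \<in> Es H s"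
  shows "a + b \<in> Es H s"
proof -
  have bH: "b \<in> H" and nb: "\<not> (b \<le> s \<and> s - b \<in> H)" using b by (auto simp: Es_def)
  have "\<not> (a + b \<le> s \<and> s - (a + b) \<in> H)"
  proof
    assume h: "a + b \<le> s \<and> s - (a + b) \<in> H"
    hence "s - b = (s - (a + b)) + a" by simp
    hence "s - b \<in> H" using cl[of "s - (a+b)" a] h a by simp
    thus False using nb h by simp
  qed
  thus ?thesis using cl[OF a bH] by (simp add: Es_def)
qed

lemma Es_SC:
  assumes H0: "0 \<in> H" and cl: "\<And>a b. a \<in> H \<Longrightarrow> b \<in> H \<Longrightarrow> a + b \<in> H" and s: "s \<in> H"
  shows "SC H (Es H s) - Es H s = {s}"
proof
  have "s + h \<in> Es H s" if "h \<in> H" "0 < h" for h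
    using cl[OF s that(1)] that(2) by (simp add: Es_def)
  moreover have "s \<notin> Es H s" using H0 by (simp add: Es_def)
  ultimately show "{s} \<subseteq> SC H (Es H s) - Es H s"
    using s by (simp add: SC_def)
  show "SC H (Es H s) - Es H s \<subseteq> {s}"
  proof
    fix n assume n: "n \<in> SC H (Es H s) - Es H s"
    hence nH: "n \<in> H" and le: "n \<le> s" and d: "s - n \<in> H"
      and sc: "\<And>h. h \<in> H \<Longrightarrow> 0 < h \<Longrightarrow> n + h \<in> Es H s" by (auto simp: SC_def Es_def)
    show "n \<in> {s}"
    proof (rule ccontr)
      assume "n \<notin> {s}"
      hence "0 < s - n" using le by auto
      from sc[OF d this] have "s \<in> Es H s" using le by simp
      thus False using H0 by (simp add: Es_def)
    qed
  qed
qed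

lemma comb1:
  assumes sub: "E \<subseteq> H" and id: "\<And>a b. a \<in> H \<Longrightarrow> b \<in> E \<Longrightarrow> a + b \<in> E"
    and H0: "0 \<in> H" and cl: "\<And>a b. a \<in> H \<Longrightarrow> b \<in> H \<Longrightarrow> a + b \<in> H"
    and e0: "e0 \<in> E" and B: "\<And>n. B < n \<Longrightarrow> n \<in> H"
    and s: "s \<in> SC H E - E"
    and uq: "\<And>s'. s' \<in> SC H E - E \<Longrightarrow> s' = s"
  shows "E = Es H s"
proof
  show "E \<subseteq> Es H s"
  proof
    fix n assume n: "n \<in> E"
    show "n \<in> Es H s"
    proof (rule ccontr)
      assume "n \<notin> Es H s"
      hence "n \<le> s" "s - n \<in> H" using n sub by (auto simp: Es_def)
      hence "s \<in> E" using id[OF _ n, of "s - n"] by simp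
      thus False using s by simp
    qed
  qed
next
  show "Es H s \<subseteq> E"
  proof
    fix n assume n: "n \<in> Es H s"
    hence nH: "n \<in> H" and nn: "\<not> (n \<le> s \<and> s - n \<in> H)" by (auto simp: Es_def)
    show "n \<in> E"
    proof (rule ccontr)
      assume nE: "n \<notin> E"
      define T where "T = {h \<in> H. n + h \<notin> E}"
      have T0: "0 \<in> T" using H0 nE by (simp add: T_def)
      have Tb: "T \<subseteq> {..e0 + B}"
      proof
        fix h assume h: "h \<in> T"
        show "h \<in> {..e0 + B}"
        proof (rule ccontr)
          assume "h \<notin> {..e0 + B}"
          hence "n + h - e0 \<in> H" using B by auto
          hence "(n + h - e0) + e0 \<in> E" using id[OF _ e0] by blast
          moreover have "(n + h - e0) + e0 = n + h" using \<open>h \<notin> {..e0 + B}\<close> by auto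
          ultimately show False using h by (simp add: T_def)
        qed
      qed
      have fT: "finite T" using Tb finite_subset by blast
      define h0 where "h0 = Max T"
      have h0T: "h0 \<in> T" using fT T0 by (auto simp: h0_def intro: Max_in)
      have "n + h0 \<in> SC H E - E"
        unfolding SC_def
      proof (intro DiffI CollectI conjI ballI impI)
        show "n + h0 \<in> H" using cl[OF nH] h0T by (simp add: T_def)
        show "n + h0 \<notin> E" using h0T by (simp add: T_def)
        fix h assume h: "h \<in> H" "0 < h"
        show "n + h0 + h \<in> E"
        proof (rule ccontr)
          assume "n + h0 + h \<notin> E"
          hence "h0 + h \<in> T" using cl[of h0 h] h h0T by (simp add: T_def add.assoc)
          hence "h0 + h \<le> h0" using Max_ge[OF fT] unfolding h0_def by blast
          thus False using h by simp
        qed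
      qed
      hence "n + h0 = s" by (rule uq)
      thus False using nn h0T by (auto simp: T_def)
    qed
  qed
qed



lemma Es_colon:
  assumes big: "\<And>n. F < n \<Longrightarrow> n \<in> H" and sym: "\<And>n. n \<le> F \<Longrightarrow> (n \<in> H \<longleftrightarrow> F - n \<notin> H)"
    and m: "m \<le> F"
  shows "Es H (F - m) = {n \<in> H. n + m \<in> H}"
proof (rule set_eqI)
  fix n
  show "n \<in> Es H (F - m) \<longleftrightarrow> n \<in> {n \<in> H. n + m \<in> H}"
  proof (cases "n \<le> F - m")
    case True
    hence e: "F - m - n = F - (n + m)" and le: "n + m \<le> F" using m by auto
    show ?thesis using sym[OF le] True unfolding Es_def e by (auto simp: add.commute[of n m])
  next
    case False
    hence "F < n + m" by auto
    thus ?thesis using big[of "n+m"] False by (auto simp: Es_def)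
  qed
qed

lemma Es_shift:
  assumes big: "\<And>n. F < n \<Longrightarrow> n \<in> H" and sym: "\<And>n. n \<le> F \<Longrightarrow> (n \<in> H \<longleftrightarrow> F - n \<notin> H)"
  shows "Es H (F + m) = {n. m \<le> n \<and> n \<in> H \<and> n - m \<in> H}"
proof (rule set_eqI)
  fix n
  show "n \<in> Es H (F + m) \<longleftrightarrow> n \<in> {n. m \<le> n \<and> n \<in> H \<and> n - m \<in> H}"
  proof (cases "n < m")
    case True
    hence "F + m - n \<in> H" using big[of "F + m - n"] by auto
    thus ?thesis using True by (auto simp: Es_def)
  next
    case False
    show ?thesis
    proof (cases "F + m < n")
      case True
      hence "n - m \<in> H" using big[of "n - m"] by auto
      thus ?thesis using True False by (auto simp: Es_def)
    next
      case False2: False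
      hence e: "F + m - n = F - (n - m)" and le: "n - m \<le> F" using False by auto
      show ?thesis using sym[OF le] False False2 unfolding Es_def e by auto
    qed
  qed
qed

lemma Max_Es:
  assumes H0: "0 \<in> H" and s: "s \<in> H"
  shows "Max (H - Es H s) = s"
proof (rule Max_eqI)
  show "finite (H - Es H s)"
    by (rule finite_subset[of _ "{..s}"]) (auto simp: Es_def)
  show "s \<in> H - Es H s" using H0 s by (simp add: Es_def)
  fix y assume "y \<in> H - Es H s" thus "y \<le> s" by (simp add: Es_def)
qed

lemma gor_unique:
  assumes sub: "E \<subseteq> H" and id: "\<And>a b. a \<in> H \<Longrightarrow> b \<in> E \<Longrightarrow> a + b \<in> E"
    and ne: "MS E \<noteq> ({0} :: 'a::field poly set)" and gor: "gorenstein_quot H (MS E :: 'a poly set)"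
  shows "\<exists>s. s \<in> SC H E - E \<and> (\<forall>s'. s' \<in> SC H E - E \<longrightarrow> s' = s)"
proof -
  obtain p :: "'a poly" where p: "p \<in> MS (SC H E)" "p \<notin> MS E"
    and all: "\<And>q. q \<in> MS (SC H E) \<Longrightarrow> \<exists>c. q - smult c p \<in> MS E"
  proof -
    have soc: "socle H (MS E) = (MS (SC H E) :: 'a poly set)" by (rule socle_MS[OF sub id])
    have "\<exists>p\<in>socle H (MS E). p \<notin> MS E \<and> (\<forall>s\<in>socle H (MS E). \<exists>c. s - smult c p \<in> (MS E :: 'a poly set))"
      using gor ne unfolding gorenstein_quot_def by simp
    thus ?thesis using that unfolding soc by blast
  qed
  obtain s where s: "coeff p s \<noteq> 0" "s \<notin> E" using p(2) by (auto simp: MS_def)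
  have sS: "s \<in> SC H E" using p(1) s(1) by (auto simp: MS_def)
  have key: "\<exists>c. c * coeff p t = 1 \<and> (\<forall>t'. t' \<notin> E \<longrightarrow> t' \<noteq> t \<longrightarrow> coeff p t' = 0)"
    if t: "t \<in> SC H E - E" for t
  proof -
    have "monom 1 t \<in> (MS (SC H E) :: 'a poly set)" using t by (simp add: monom_MS)
    then obtain c where c: "monom 1 t - smult c p \<in> MS E" using all by blast
    have "coeff (monom 1 t - smult c p) t \<noteq> 0 \<longrightarrow> t \<in> E" using c unfolding MS_def by blast
    hence "coeff (monom 1 t - smult c p) t = 0" using t by blast
    hence c1: "c * coeff p t = 1" by simp
    hence c0: "c \<noteq> 0" by auto
    have "coeff p t' = 0" if "t' \<notin> E" "t' \<noteq> t" for t'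
    proof -
      have "coeff (monom 1 t - smult c p) t' \<noteq> 0 \<longrightarrow> t' \<in> E" using c unfolding MS_def by blast
      hence "coeff (monom 1 t - smult c p) t' = 0" using that by blast
      thus ?thesis using that c0 by simp
    qed
    thus ?thesis using c1 by blast
  qed
  have "s' = s" if "s' \<in> SC H E - E" for s'
  proof (rule ccontr)
    assume ne': "s' \<noteq> s"
    obtain c where "c * coeff p s = 1" using key[of s] sS s by blast
    moreover have "coeff p s = 0" using key[OF that] ne' s by blast
    ultimately show False by simp
  qed
  thus ?thesis using sS s by blast
qed

lemma gor_Es:
  assumes H0: "0 \<in> H" and cl: "\<And>a b. a \<in> H \<Longrightarrow> b \<in> H \<Longrightarrow> a + b \<in> H"
    and s: "s \<in> H" and B: "\<And>n. B < n \<Longrightarrow> n \<in> H"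
  shows "gorenstein_quot H (MS (Es H s) :: 'a::field poly set)"
proof -
  have id: "\<And>a b. a \<in> H \<Longrightarrow> b \<in> Es H s \<Longrightarrow> a + b \<in> Es H s" using Es_ideal[OF cl] by blast
  have eE: "s + B + 1 \<in> Es H s" using B[of "s + B + 1"] by (simp add: Es_def)
  hence "monom (1::'a) (s + B + 1) \<in> MS (Es H s)" by (simp add: monom_MS)
  hence ne: "MS (Es H s) \<noteq> ({0} :: 'a poly set)" by auto
  have SC: "SC H (Es H s) - Es H s = {s}" by (rule Es_SC[OF H0 cl s])
  have "\<exists>p\<in>MS (SC H (Es H s)). p \<notin> (MS (Es H s) :: 'a poly set) \<and>
          (\<forall>q\<in>MS (SC H (Es H s)). \<exists>c. q - smult c p \<in> MS (Es H s))"
  proof (intro bexI[of _ "monom 1 s"] conjI ballI)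
    show "monom 1 s \<in> (MS (SC H (Es H s)) :: 'a poly set)" using SC by (auto simp: monom_MS)
    show "monom 1 s \<notin> (MS (Es H s) :: 'a poly set)" using SC by (auto simp: monom_MS)
    fix q :: "'a poly" assume q: "q \<in> MS (SC H (Es H s))"
    show "\<exists>c. q - smult c (monom 1 s) \<in> MS (Es H s)"
    proof (intro exI[of _ "coeff q s"])
      show "q - smult (coeff q s) (monom 1 s) \<in> MS (Es H s)"
        unfolding MS_def
      proof (intro CollectI allI impI)
        fix n assume "coeff (q - smult (coeff q s) (monom 1 s)) n \<noteq> 0"
        hence "n \<noteq> s" "coeff q n \<noteq> 0" by (auto split: if_splits)
        hence "n \<in> SC H (Es H s)" "n \<noteq> s" using q by (auto simp: MS_def)
        thus "n \<in> Es H s" using SC by blast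
      qed
    qed
  qed
  moreover have soc: "socle H (MS (Es H s)) = (MS (SC H (Es H s)) :: 'a poly set)"
    by (rule socle_MS[OF Es_sub id])
  ultimately show ?thesis using ne unfolding gorenstein_quot_def by simp
qed

lemma np_colon:
  fixes H :: "nat set"
  assumes H0: "0 \<in> H" and m: "m \<notin> H" and FH: "F \<notin> H" and big: "\<And>n. F < n \<Longrightarrow> n \<in> H"
  shows "{n \<in> H. n + m \<in> H} \<noteq> {n. d \<le> n \<and> n - d \<in> H}"
proof
  assume eq: "{n \<in> H. n + m \<in> H} = {n. d \<le> n \<and> n - d \<in> H}"
  have "d \<in> {n. d \<le> n \<and> n - d \<in> H}" using H0 by simp
  hence "d \<in> {n \<in> H. n + m \<in> H}" unfolding eq .
  hence d: "d \<in> H" "d + m \<in> H" by simp_all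
  have "d \<noteq> 0" using d(2) m by (cases "d = 0") simp_all
  hence "F < F + d" by simp
  hence a: "F + d \<in> H" by (rule big)
  have "F < F + d + m" using \<open>d \<noteq> 0\<close> by simp
  hence b: "F + d + m \<in> H" by (rule big)
  have "F + d \<in> {n \<in> H. n + m \<in> H}" using a b by simp
  hence "F + d \<in> {n. d \<le> n \<and> n - d \<in> H}" unfolding eq .
  thus False using FH by simp
qed

lemma np_shift:
  fixes H :: "nat set"
  assumes H0: "0 \<in> H" and m: "m \<notin> H" and FH: "F \<notin> H" and big: "\<And>n. F < n \<Longrightarrow> n \<in> H"
  shows "{n. m \<le> n \<and> n \<in> H \<and> n - m \<in> H} \<noteq> {n. d \<le> n \<and> n - d \<in> H}"
proof
  assume eq: "{n. m \<le> n \<and> n \<in> H \<and> n - m \<in> H} = {n. d \<le> n \<and> n - d \<in> H}"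
  have "d \<in> {n. d \<le> n \<and> n - d \<in> H}" using H0 by simp
  hence "d \<in> {n. m \<le> n \<and> n \<in> H \<and> n - m \<in> H}" unfolding eq .
  hence d: "m \<le> d" "d \<in> H" "d - m \<in> H" by simp_all
  have "d \<noteq> m" using d(2) m by (cases "d = m") simp_all
  hence md: "m < d" using d(1) by simp
  hence "F < F + d" by simp
  hence a: "F + d \<in> H" by (rule big)
  have "F < F + d - m" using md by simp
  hence b: "F + d - m \<in> H" by (rule big)
  have "F + d \<in> {n. m \<le> n \<and> n \<in> H \<and> n - m \<in> H}" using a b md by simp
  hence "F + d \<in> {n. d \<le> n \<and> n - d \<in> H}" unfolding eq .
  thus False using FH by simp
qed

lemma good_Es:
  assumes H0: "0 \<in> H" and cl: "\<And>a b. a \<in> H \<Longrightarrow> b \<in> H \<Longrightarrow> a + b \<in> H"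
    and s: "s \<in> H" and B: "\<And>n. B < n \<Longrightarrow> n \<in> H"
    and np: "\<And>d. Es H s \<noteq> {n. d \<le> n \<and> n - d \<in> H}"
  shows "graded_ideal H (MS (Es H s) :: 'a::field poly set) \<and> gorenstein_quot H (MS (Es H s) :: 'a poly set)
         \<and> 2 \<le> mu H (MS (Es H s) :: 'a poly set)"
proof (intro conjI)
  have id: "\<And>a b. a \<in> H \<Longrightarrow> b \<in> Es H s \<Longrightarrow> a + b \<in> Es H s" using Es_ideal[OF cl] by blast
  show "graded_ideal H (MS (Es H s) :: 'a poly set)" by (rule MS_ideal[OF Es_sub id])
  show "gorenstein_quot H (MS (Es H s) :: 'a poly set)" by (rule gor_Es[OF H0 cl s B])
  have eE: "s + B + 1 \<in> Es H s" using B[of "s + B + 1"] by (simp add: Es_def)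
  hence "monom (1::'a) (s + B + 1) \<in> MS (Es H s)" by (simp add: monom_MS)
  hence ne: "MS (Es H s) \<noteq> ({0} :: 'a poly set)" by auto
  obtain G where G: "finite G" "G \<subseteq> MS (Es H s)" "(MS (Es H s) :: 'a poly set) = span H G"
    using fg[OF Es_sub id eE H0 B] by blast
  show "2 \<le> mu H (MS (Es H s) :: 'a poly set)"
  proof (rule mu_ge2[OF G ne])
    fix g assume g: "g \<in> (MS (Es H s) :: 'a poly set)"
    show "MS (Es H s) \<noteq> {r * g | r. r \<in> sgring H}"
    proof
      assume "MS (Es H s) = {r * g | r. r \<in> sgring H}"
      hence "\<exists>d. Es H s = {n. d \<le> n \<and> n - d \<in> H}"
        using principal_comb[OF Es_sub id _ g] eE unfolding sgring_MS by blast
      thus False using np by blast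
    qed
  qed
qed



theorem corollary4p2:
  fixes H :: "nat set"
  assumes "numerical_semigroup H" and "symmetric_sg H"
  shows "{I :: 'a::field poly set. graded_ideal H I \<and> gorenstein_quot H I \<and> mu H I \<ge> 2}
           = {colon H m | m. m \<notin> H} \<union> {shifted_colon H m | m. m \<notin> H}
         \<and> (\<forall>m. m \<notin> H \<longrightarrow>
              int (a_quot H (colon H m :: 'a poly set)) = frob H - int m
            \<and> int (a_quot H (shifted_colon H m :: 'a poly set)) = frob H + int m)"
proof -
  have H0: "0 \<in> H" and cl: "\<And>a b. a \<in> H \<Longrightarrow> b \<in> H \<Longrightarrow> a + b \<in> H" and fin: "finite (- H)"
    using assms(1) unfolding numerical_semigroup_def by auto
  obtain B where B: "\<And>n. B < n \<Longrightarrow> n \<in> H" using bound_ex[OF fin] by blast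
  define F where "F = Max (- H)"
  have FF: "frob H = int F" and FH: "F \<notin> H" and big: "\<And>n. F < n \<Longrightarrow> n \<in> H"
    if nU: "H \<noteq> UNIV"
  proof -
    have ne: "- H \<noteq> {}" using nU by blast
    show "frob H = int F" unfolding F_def by (rule frob_nat[OF nU fin])
    show "F \<notin> H" using Max_in[OF fin ne] unfolding F_def by blast
    fix n assume n: "F < n"
    show "n \<in> H"
    proof (rule ccontr)
      assume "n \<notin> H" hence "n \<le> F" unfolding F_def using Max_ge[OF fin] by blast
      thus False using n by simp
    qed
  qed
  have sym: "\<And>n. n \<le> F \<Longrightarrow> (n \<in> H \<longleftrightarrow> F - n \<notin> H)" if nU: "H \<noteq> UNIV"
    using sym_nat[OF assms(2) FF[OF nU]] by blast
  have cm: "H \<noteq> UNIV \<and> m \<le> F \<and> F - m \<in> H \<and> F + m \<in> H \<and> 0 < m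
      \<and> (colon H m :: 'a poly set) = MS (Es H (F - m))
      \<and> (shifted_colon H m :: 'a poly set) = MS (Es H (F + m))" if m: "m \<notin> H" for m
  proof -
    have nU: "H \<noteq> UNIV" using m by blast
    have mF: "m \<le> F" using big[OF nU, of m] m by (cases "F < m") simp_all
    have m0: "0 < m" using m H0 by (cases "m = 0") simp_all
    have "F - m \<in> H" using sym[OF nU mF] m by simp
    moreover have "F + m \<in> H" using big[OF nU] m0 by simp
    moreover have "(colon H m :: 'a poly set) = MS (Es H (F - m))"
      using Es_colon[OF big[OF nU] sym[OF nU] mF] by (simp add: colon_MS)
    moreover have "(shifted_colon H m :: 'a poly set) = MS (Es H (F + m))"
      using Es_shift[OF big[OF nU] sym[OF nU], of m] by (simp add: shifted_MS)
    ultimately show ?thesis using nU mF m0 by blast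
  qed
  have part2: "\<forall>m. m \<notin> H \<longrightarrow>
              int (a_quot H (colon H m :: 'a poly set)) = frob H - int m
            \<and> int (a_quot H (shifted_colon H m :: 'a poly set)) = frob H + int m"
  proof (intro allI impI)
    fix m assume m: "m \<notin> H"
    note c = cm[OF m]
    have "a_quot H (colon H m :: 'a poly set) = F - m"
      using c Max_Es[OF H0] by (simp add: a_quot_MS)
    moreover have "a_quot H (shifted_colon H m :: 'a poly set) = F + m"
      using c Max_Es[OF H0] by (simp add: a_quot_MS)
    ultimately show "int (a_quot H (colon H m :: 'a poly set)) = frob H - int m
            \<and> int (a_quot H (shifted_colon H m :: 'a poly set)) = frob H + int m"
      using c FF by simp
  qed
  have sup: "I \<in> {I :: 'a::field poly set. graded_ideal H I \<and> gorenstein_quot H I \<and> mu H I \<ge> 2}"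
    if I: "I \<in> {colon H m | m. m \<notin> H} \<union> {shifted_colon H m | m. m \<notin> H}" for I
  proof -
    from I consider m where "m \<notin> H" "I = colon H m" | m where "m \<notin> H" "I = shifted_colon H m" by blast
    thus ?thesis
    proof cases
      case 1
      note c = cm[OF 1(1)]
      have np: "Es H (F - m) \<noteq> {n. d \<le> n \<and> n - d \<in> H}" for d
        using np_colon[OF H0 1(1) FH big, of d] Es_colon[OF big sym] c by auto
      show ?thesis using good_Es[OF H0 cl _ B np] c 1(2) by simp
    next
      case 2
      note c = cm[OF 2(1)]
      have np: "Es H (F + m) \<noteq> {n. d \<le> n \<and> n - d \<in> H}" for d
        using np_shift[OF H0 2(1) FH big, of d] Es_shift[OF big sym] c by auto
      show ?thesis using good_Es[OF H0 cl _ B np] c 2(2) by simp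
    qed
  qed
  have sub: "I \<in> {colon H m | m. m \<notin> H} \<union> {shifted_colon H m | m. m \<notin> H}"
    if I: "I \<in> {I :: 'a::field poly set. graded_ideal H I \<and> gorenstein_quot H I \<and> mu H I \<ge> 2}" for I
  proof -
    have g: "graded_ideal H I" and gor: "gorenstein_quot H I" and mu2: "2 \<le> mu H I" using I by auto
    define E where "E = {n. monom (1::'a) n \<in> I}"
    have IE: "I = MS E" unfolding E_def by (rule graded_MS[OF H0 g])
    have Iid: "ideal_of H I" using g by (simp add: graded_ideal_def)
    have EH: "E \<subseteq> H"
    proof
      fix n assume "n \<in> E"
      hence "monom (1::'a) n \<in> MS H" using Iid by (auto simp: E_def ideal_of_def sgring_MS)
      thus "n \<in> H" by (simp add: monom_MS)
    qed
    have id: "a + b \<in> E" if "a \<in> H" "b \<in> E" for a b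
    proof -
      have "monom (1::'a) a \<in> sgring H" using that by (simp add: sgring_MS monom_MS)
      hence "monom (1::'a) a * monom 1 b \<in> I" using Iid that by (auto simp: ideal_of_def E_def)
      thus ?thesis by (simp add: E_def mult_monom)
    qed
    have ne0: "I \<noteq> {0}"
    proof
      assume "I = {0}"
      have "mu H ({0}::'a poly set) \<le> card ({} :: 'a poly set)"
        by (rule mu_le) (simp_all add: span_empty)
      thus False using mu2 \<open>I = {0}\<close> by simp
    qed
    hence neE: "E \<noteq> {}" using IE MS_empty by auto
    then obtain e0 where e0: "e0 \<in> E" by blast
    have notp: "E \<noteq> {n. d \<le> n \<and> n - d \<in> H}" for d
    proof
      assume "E = {n. d \<le> n \<and> n - d \<in> H}"
      hence "mu H I \<le> 1" using principal_mu[OF H0, where 'a='a, of d] IE by simp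
      thus False using mu2 by simp
    qed
    obtain s where s: "s \<in> SC H E - E" and uq: "\<And>s'. s' \<in> SC H E - E \<Longrightarrow> s' = s"
      using gor_unique[OF EH id, where 'a='a] ne0 gor IE by metis
    have EEs: "E = Es H s" by (rule comb1[OF EH id H0 cl e0 B s uq])
    have sH: "s \<in> H" using s by (simp add: SC_def)
    have nU: "H \<noteq> UNIV"
    proof
      assume U: "H = UNIV"
      define d where "d = (LEAST n. n \<in> E)"
      have "E = {n. d \<le> n \<and> n - d \<in> H}"
      proof (rule set_eqI)
        fix n show "n \<in> E \<longleftrightarrow> n \<in> {n. d \<le> n \<and> n - d \<in> H}"
        proof
          assume "n \<in> E" thus "n \<in> {n. d \<le> n \<and> n - d \<in> H}" using U by (simp add: d_def Least_le)
        next
          assume n: "n \<in> {n. d \<le> n \<and> n - d \<in> H}"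
          have dE: "d \<in> E" unfolding d_def using e0 by (rule LeastI)
          have "(n - d) + d \<in> E" using id[OF _ dE] U by simp
          thus "n \<in> E" using n by simp
        qed
      qed
      thus False using notp by blast
    qed
    have sF: "s \<noteq> F" using sH FH[OF nU] by blast
    show ?thesis
    proof (cases "s < F")
      case True
      define m where "m = F - s"
      have mF: "m \<le> F" and sm: "s = F - m" using True by (auto simp: m_def)
      have mH: "m \<notin> H" using sym[OF nU mF] sH sm by simp
      have "I = colon H m" using cm[OF mH] IE EEs sm by simp
      thus ?thesis using mH by blast
    next
      case False
      define m where "m = s - F"
      have sm: "s = F + m" using False sF by (auto simp: m_def)
      have E2: "E = {n. m \<le> n \<and> n \<in> H \<and> n - m \<in> H}"
        using EEs sm Es_shift[OF big[OF nU] sym[OF nU]] by simp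
      have mH: "m \<notin> H"
      proof
        assume mH: "m \<in> H"
        have "E = {n. m \<le> n \<and> n - m \<in> H}"
        proof (rule set_eqI)
          fix n show "n \<in> E \<longleftrightarrow> n \<in> {n. m \<le> n \<and> n - m \<in> H}"
          proof
            assume "n \<in> E" thus "n \<in> {n. m \<le> n \<and> n - m \<in> H}" using E2 by simp
          next
            assume n: "n \<in> {n. m \<le> n \<and> n - m \<in> H}"
            hence "(n - m) + m \<in> H" using cl[of "n - m" m] mH by simp
            hence "n \<in> H" using n by simp
            thus "n \<in> E" using n E2 by simp
          qed
        qed
        thus False using notp by blast
      qed
      have "I = shifted_colon H m" using cm[OF mH] IE EEs sm by simp
      thus ?thesis using mH by blast
    qed
  qed
  show ?thesis using sup sub part2 by blast
qed


end
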